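(* Let $f$ satisfy the $L$-descent condition for some $L>0$, and let $\{x^k\}$ be generated by Algorithm IRG with $\theta<\mu$, $\rho_k=\varepsilon_k$ for all $k$, and stepsizes either diminishing ($t_k>0$, $t_k\downarrow0$, $\sum_k t_k=\infty$) or of constant type (there exist $\delta\in(0,2)$ and $\delta'>0$ with $\delta'\le\frac{2-\delta}{L}$ and $t_k\in[\delta',\frac{2-\delta}{L}]$ for all $k$). Assume that $\bar x$ is an accumulation point of $\{x^k\}$ and that $f$ satisfies the KL property at $\bar x$. Then $\bar x$ is a stationary point of $f$ and $x^k\to\bar x$ as $k\to\infty$.
   Context: Algorithm IRG (general inexact reduced gradient framework). Let $f:\mathbb R^n\to\mathbb R$ be continuously differentiable. Parameters: initial point $x^1\in\mathbb R^n$, initial radii $\varepsilon_1>0$, $r_1>0$, reduction factors $\mu,\theta\in(0,1)$, and a sequence $\{\rho_k\}$ of positive numbers. For $k=1,2,\dots$: (1) choose $g^k\in\mathbb R^n$ with $\|g^k-\nabla f(x^k)\|\le\min\{\varepsilon_k,\rho_k\}$; (2) if $\|g^k\|\le r_k+\varepsilon_k$, set $r_{k+1}=\mu r_k$, $\varepsilon_{k+1}=\theta\varepsilon_k$, $d^k=0$; otherwise set $r_{k+1}=r_k$, $\varepsilon_{k+1}=\varepsilon_k$ and $d^k=-\frac{\|g^k\|-\varepsilon_k}{\|g^k\|}g^k$; (3) choose a stepsize $t_k>0$ by some rule; (4) set $x^{k+1}=x^k+t_kd^k$. $f$ satisfies the $L$-descent condition if $f(y)\le f(x)+\langle\nabla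 f(x),y-x\rangle+\frac L2\|y-x\|^2$ for all $x,y\in\mathbb R^n$. KL property: $f$ satisfies the KL property at $\bar x$ if there exist $\eta>0$, a neighborhood $U$ of $\bar x$, and a nondecreasing function $\psi:(0,\eta)\to(0,\infty)$ such that $1/\psi$ is integrable over $(0,\eta)$ and $\|\nabla f(x)\|\ge\psi(f(x)-f(\bar x))$ for all $x\in U$ with $f(\bar x)<f(x)<f(\bar x)+\eta$. *)

theory Defs
  imports "HOL-Analysis.Analysis"
begin

definition L_descent :: "('a::real_inner \<Rightarrow> real) \<Rightarrow> ('a \<Rightarrow> 'a) \<Rightarrow> real \<Rightarrow> bool" where
  "L_descent f grad L \<longleftrightarrow>
     (\<forall>x y. f y \<le> f x + grad x \<bullet> (y - x) + L / 2 * (norm (y - x))\<^sup>2)"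

text \<open>Runs of Algorithm IRG (iterations indexed from 0 instead of 1).\<close>
definition IRG_run ::
  "('a::real_inner \<Rightarrow> 'a) \<Rightarrow> real \<Rightarrow> real \<Rightarrow> (nat \<Rightarrow> real) \<Rightarrow>
   (nat \<Rightarrow> 'a) \<Rightarrow> (nat \<Rightarrow> 'a) \<Rightarrow> (nat \<Rightarrow> real) \<Rightarrow> (nat \<Rightarrow> real) \<Rightarrow>
   (nat \<Rightarrow> 'a) \<Rightarrow> (nat \<Rightarrow> real) \<Rightarrow> bool" where
  "IRG_run grad \<mu> \<theta> \<rho> x g \<epsilon> r d t \<longleftrightarrow>
     \<epsilon> 0 > 0 \<and> r 0 > 0 \<and> 0 < \<mu> \<and> \<mu> < 1 \<and> 0 < \<theta> \<and> \<theta> < 1 \<and>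
     (\<forall>k. \<rho> k > 0) \<and>
     (\<forall>k. norm (g k - grad (x k)) \<le> min (\<epsilon> k) (\<rho> k)) \<and>
     (\<forall>k. if norm (g k) \<le> r k + \<epsilon> k
          then r (Suc k) = \<mu> * r k \<and> \<epsilon> (Suc k) = \<theta> * \<epsilon> k \<and> d k = 0
          else r (Suc k) = r k \<and> \<epsilon> (Suc k) = \<epsilon> k \<and>
               d k = - ((norm (g k) - \<epsilon> k) / norm (g k)) *\<^sub>R g k) \<and>
     (\<forall>k. t k > 0) \<and>
     (\<forall>k. x (Suc k) = x k + t k *\<^sub>R d k)"

definition diminishing_steps :: "(nat \<Rightarrow> real) \<Rightarrow> bool" where
  "diminishing_steps t \<longleftrightarrow> (\<forall>k. t k > 0) \<and> decseq t \<and> t \<longlonglongrightarrow> 0 \<and>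
     filterlim (\<lambda>n. \<Sum>k<n. t k) at_top sequentially"

definition constant_type_steps :: "real \<Rightarrow> (nat \<Rightarrow> real) \<Rightarrow> bool" where
  "constant_type_steps L t \<longleftrightarrow> (\<exists>\<delta> \<delta>'. 0 < \<delta> \<and> \<delta> < 2 \<and> 0 < \<delta>' \<and> \<delta>' \<le> (2 - \<delta>) / L \<and>
     (\<forall>k. \<delta>' \<le> t k \<and> t k \<le> (2 - \<delta>) / L))"

definition accumulation_point :: "(nat \<Rightarrow> 'a::topological_space) \<Rightarrow> 'a \<Rightarrow> bool" where
  "accumulation_point x a \<longleftrightarrow> (\<exists>\<sigma>. strict_mono \<sigma> \<and> (x \<circ> \<sigma>) \<longlonglongrightarrow> a)"

definition KL_at :: "('a::real_normed_vector \<Rightarrow> real) \<Rightarrow> ('a \<Rightarrow> 'a) \<Rightarrow> 'a \<Rightarrow> bool" where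
  "KL_at f grad xb \<longleftrightarrow>
     (\<exists>\<eta> U \<psi>. \<eta> > 0 \<and> open U \<and> xb \<in> U \<and>
        mono_on {0<..<\<eta>} \<psi> \<and> (\<forall>s\<in>{0<..<\<eta>}. \<psi> s > 0) \<and>
        (\<lambda>s. 1 / \<psi> s) integrable_on {0<..<\<eta>} \<and>
        (\<forall>x\<in>U. f xb < f x \<and> f x < f xb + \<eta> \<longrightarrow> norm (grad x) \<ge> \<psi> (f x - f xb)))"

end

theory Submission imports Defs begin


lemma phi_props:
  fixes \<psi> :: "real \<Rightarrow> real" and \<eta> :: real
  assumes eta: "\<eta> > 0" and mono: "mono_on {0<..<\<eta>} \<psi>"
    and pos: "\<forall>s\<in>{0<..<\<eta>}. \<psi> s > 0"
    and int: "(\<lambda>s. 1 / \<psi> s) integrable_on {0<..<\<eta>}"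
  defines "h \<equiv> (\<lambda>u. if 0 < u \<and> u < \<eta> then 1 / \<psi> u else 0)"
  defines "\<phi> \<equiv> (\<lambda>s. integral {0..s} h)"
  shows "\<And>a b. 0 < b \<Longrightarrow> b \<le> a \<Longrightarrow> a < \<eta> \<Longrightarrow> (a - b) / \<psi> a \<le> \<phi> a - \<phi> b"
    and "\<And>s. 0 \<le> s \<Longrightarrow> s \<le> \<eta> \<Longrightarrow> 0 \<le> \<phi> s"
    and "\<And>e. e > 0 \<Longrightarrow> \<exists>\<delta>>0. \<forall>s. 0 < s \<and> s < \<delta> \<longrightarrow> \<phi> s < e"
proof -
  have hI: "h integrable_on {0<..<\<eta>}"
    using int by (rule integrable_eq) (simp add: h_def)
  hence hI2: "h integrable_on {0..\<eta>}" by (simp add: integrable_on_Icc_iff_Ioo)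
  have hnn: "\<And>u. 0 \<le> h u" using pos by (auto simp: h_def less_imp_le)
  show "\<And>s. 0 \<le> s \<Longrightarrow> s \<le> \<eta> \<Longrightarrow> 0 \<le> \<phi> s"
    unfolding \<phi>_def using hnn by (intro integral_nonneg integrable_on_subinterval[OF hI2]) auto
  show "(a - b) / \<psi> a \<le> \<phi> a - \<phi> b" if ab: "0 < b" "b \<le> a" "a < \<eta>" for a b
  proof -
    have ia: "h integrable_on {0..a}" using ab by (intro integrable_on_subinterval[OF hI2]) auto
    have "integral {0..b} h + integral {b..a} h = integral {0..a} h"
      using Henstock_Kurzweil_Integration.integral_combine[of 0 b a h] ab ia by simp
    hence eq: "\<phi> a - \<phi> b = integral {b..a} h" by (simp add: \<phi>_def)
    have iba: "h integrable_on {b..a}" using ab by (intro integrable_on_subinterval[OF hI2]) auto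
    have "integral {b..a} (\<lambda>u. 1 / \<psi> a) \<le> integral {b..a} h"
    proof (rule integral_le[OF _ iba])
      show "(\<lambda>u. 1 / \<psi> a) integrable_on {b..a}" by (rule integrable_const_ivl)
      fix u assume u: "u \<in> {b..a}"
      have "\<psi> u \<le> \<psi> a" using mono u ab by (intro mono_onD[OF mono]) auto
      moreover have "\<psi> u > 0" using pos u ab by auto
      ultimately show "1 / \<psi> a \<le> h u" using u ab by (auto simp: h_def intro!: divide_left_mono)
    qed
    thus ?thesis using eq ab by (simp add: divide_simps)
  qed
  show "\<exists>\<delta>>0. \<forall>s. 0 < s \<and> s < \<delta> \<longrightarrow> \<phi> s < e" if e: "e > 0" for e
  proof -
    have "continuous_on {0..\<eta>} \<phi>" unfolding \<phi>_def by (rule indefinite_integral_continuous_1[OF hI2])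
    hence "continuous (at 0 within {0..\<eta>}) \<phi>" using eta by (simp add: continuous_on_eq_continuous_within)
    moreover have "\<phi> 0 = 0" by (simp add: \<phi>_def)
    ultimately obtain d where d: "d > 0" "\<forall>s\<in>{0..\<eta>}. dist s 0 < d \<longrightarrow> dist (\<phi> s) 0 < e"
      using e unfolding continuous_within_eps_delta by force
    show ?thesis
      apply (rule exI[of _ "min d \<eta>"]) using d eta by (auto simp: dist_real_def)
  qed
qed

lemma norm_telescope_le:
  fixes y :: "nat \<Rightarrow> 'a::real_normed_vector"
  shows "norm (y m - y 0) \<le> (\<Sum>j<m. norm (y (Suc j) - y j))"
proof (induction m)
  case 0 then show ?case by simp
next
  case (Suc m)
  have "norm (y (Suc m) - y 0) \<le> norm (y (Suc m) - y m) + norm (y m - y 0)"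
    using norm_triangle_ineq[of "y (Suc m) - y m" "y m - y 0"] by simp
  then show ?case using Suc by simp
qed

lemma summable_diff_convergent:
  fixes y :: "nat \<Rightarrow> 'a::banach"
  assumes "summable (\<lambda>j. norm (y (Suc j) - y j))"
  shows "convergent y"
proof -
  have "summable (\<lambda>j. y (Suc j) - y j)" using assms by (rule summable_norm_cancel)
  hence "(\<lambda>n. \<Sum>j<n. y (Suc j) - y j) \<longlonglongrightarrow> (\<Sum>j. y (Suc j) - y j)" by (rule summable_LIMSEQ)
  hence "(\<lambda>n. y n - y 0) \<longlonglongrightarrow> (\<Sum>j. y (Suc j) - y j)" by (simp add: sum_lessThan_telescope)
  hence "(\<lambda>n. (y n - y 0) + y 0) \<longlonglongrightarrow> (\<Sum>j. y (Suc j) - y j) + y 0" by (intro tendsto_intros)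
  thus ?thesis by (auto simp: convergent_def)
qed

lemma phi_exists:
  fixes \<psi> :: "real \<Rightarrow> real" and \<eta> :: real
  assumes eta: "\<eta> > 0" and mono: "mono_on {0<..<\<eta>} \<psi>"
    and pos: "\<forall>s\<in>{0<..<\<eta>}. \<psi> s > 0"
    and int: "(\<lambda>s. 1 / \<psi> s) integrable_on {0<..<\<eta>}"
  obtains \<phi> where "\<And>a b. 0 < b \<Longrightarrow> b \<le> a \<Longrightarrow> a < \<eta> \<Longrightarrow> (a - b) / \<psi> a \<le> \<phi> a - \<phi> b"
    and "\<And>s. 0 \<le> s \<Longrightarrow> s \<le> \<eta> \<Longrightarrow> 0 \<le> \<phi> s"
    and "\<And>e. e > 0 \<Longrightarrow> \<exists>\<delta>>0. \<forall>s. 0 < s \<and> s < \<delta> \<longrightarrow> \<phi> s < e"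
proof (rule that[of "\<lambda>s. integral {0..s} (\<lambda>u. if 0 < u \<and> u < \<eta> then 1 / \<psi> u else 0)"])
  fix a b :: real assume "0 < b" "b \<le> a" "a < \<eta>"
  thus "(a - b) / \<psi> a \<le> integral {0..a} (\<lambda>u. if 0 < u \<and> u < \<eta> then 1 / \<psi> u else 0) - integral {0..b} (\<lambda>u. if 0 < u \<and> u < \<eta> then 1 / \<psi> u else 0)"
    by (rule phi_props(1)[OF assms])
next
  fix s :: real assume "0 \<le> s" "s \<le> \<eta>"
  thus "0 \<le> integral {0..s} (\<lambda>u. if 0 < u \<and> u < \<eta> then 1 / \<psi> u else 0)"
    by (rule phi_props(2)[OF assms])
next
  fix e :: real assume "e > 0"
  thus "\<exists>\<delta>>0. \<forall>s. 0 < s \<and> s < \<delta> \<longrightarrow> integral {0..s} (\<lambda>u. if 0 < u \<and> u < \<eta> then 1 / \<psi> u else 0) < e"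
    by (rule phi_props(3)[OF assms])
qed
theorem mainTheorem14:
  fixes f :: "'a::euclidean_space \<Rightarrow> real" and grad :: "'a \<Rightarrow> 'a"
    and x g d :: "nat \<Rightarrow> 'a" and \<epsilon> r t :: "nat \<Rightarrow> real"
    and \<mu> \<theta> L :: real and xb :: 'a
  assumes deriv: "\<And>y. (f has_derivative (\<lambda>h. grad y \<bullet> h)) (at y)"
    and cont: "continuous_on UNIV grad"
    and Lpos: "L > 0" and desc: "L_descent f grad L"
    and run: "IRG_run grad \<mu> \<theta> \<epsilon> x g \<epsilon> r d t"
    and thmu: "\<theta> < \<mu>"
    and steps: "diminishing_steps t \<or> constant_type_steps L t"
    and acc: "accumulation_point x xb"
    and KL: "KL_at f grad xb"
  shows "grad xb = 0 \<and> x \<longlonglongrightarrow> xb"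
proof -
  note R = run[unfolded IRG_run_def]
  note eps0 = R[THEN conjunct1]
  note R2 = R[THEN conjunct2]
  note r0 = R2[THEN conjunct1]
  note R3 = R2[THEN conjunct2]
  note mu1 = R3[THEN conjunct1]
  note R4 = R3[THEN conjunct2]
  note mu2 = R4[THEN conjunct1]
  note R5 = R4[THEN conjunct2]
  note th1 = R5[THEN conjunct1]
  note R6 = R5[THEN conjunct2]
  note th2 = R6[THEN conjunct1]
  note R7 = R6[THEN conjunct2, THEN conjunct2]
  note gerr0 = R7[THEN conjunct1, rule_format]
  note R8 = R7[THEN conjunct2]
  note upd = R8[THEN conjunct1, rule_format]
  note R9 = R8[THEN conjunct2]
  note tpos = R9[THEN conjunct1, rule_format]
  note xs = R9[THEN conjunct2, rule_format]
  note mu = mu1 mu2 and th = th1 th2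
  have gerr: "\<And>k. norm (g k - grad (x k)) \<le> \<epsilon> k" using gerr0 by simp
  define N where "N k \<longleftrightarrow> norm (g k) \<le> r k + \<epsilon> k" for k
  have nul: "r (Suc k) = \<mu> * r k \<and> \<epsilon> (Suc k) = \<theta> * \<epsilon> k \<and> d k = 0" if "N k" for k
    using upd[of k] that unfolding N_def by simp
  have ser: "r (Suc k) = r k \<and> \<epsilon> (Suc k) = \<epsilon> k \<and>
               d k = - ((norm (g k) - \<epsilon> k) / norm (g k)) *\<^sub>R g k" if "\<not> N k" for k
    using upd[of k] that unfolding N_def by simp
  have pos: "\<epsilon> k > 0 \<and> r k > 0" for k
  proof (induction k)
    case 0 then show ?case using eps0 r0 by simp
  next
    case (Suc k) then show ?case using nul[of k] ser[of k] mu th by (cases "N k") auto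
  qed
  have ratio: "\<epsilon> k * r 0 \<le> \<epsilon> 0 * r k" for k
  proof (induction k)
    case 0 then show ?case by simp
  next
    case (Suc k)
    show ?case
    proof (cases "N k")
      case True
      have "\<theta> * (\<epsilon> k * r 0) \<le> \<mu> * (\<epsilon> k * r 0)"
        using thmu pos[of k] r0 by (intro mult_right_mono) auto
      also have "\<dots> \<le> \<mu> * (\<epsilon> 0 * r k)" using Suc mu by (intro mult_left_mono) auto
      finally show ?thesis using nul[OF True] by (simp add: algebra_simps)
    next
      case False then show ?thesis using ser[OF False] Suc by simp
    qed
  qed
  define C where "C = 1 + 2 * \<epsilon> 0 / r 0"
  have Cpos: "C > 0" using eps0 r0 unfolding C_def by (intro add_pos_nonneg) auto
  have serf: "norm (d k) > r k \<and> grad (x k) \<bullet> d k \<le> - (norm (d k))\<^sup>2 \<and>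
      norm (grad (x k)) \<le> C * norm (d k)" if nN: "\<not> N k" for k
  proof -
    define ng where "ng = norm (g k)"
    define e where "e = \<epsilon> k"
    define \<alpha> where "\<alpha> = (ng - e) / ng"
    have ep: "e > 0" and rp: "r k > 0" using pos[of k] by (auto simp: e_def)
    have big: "ng > r k + e" using nN unfolding N_def ng_def e_def by simp
    hence ngp: "ng > 0" and nge: "ng > e" using ep rp by auto
    have dk: "d k = - \<alpha> *\<^sub>R g k" using ser[OF nN] by (simp add: \<alpha>_def ng_def e_def)
    have ap: "\<alpha> > 0" using ngp nge by (simp add: \<alpha>_def)
    have ang: "\<alpha> * ng = ng - e" using ngp by (simp add: \<alpha>_def)
    have nd: "norm (d k) = ng - e" using ap ang by (simp add: dk ng_def)
    have cs: "(g k - grad (x k)) \<bullet> g k \<le> e * ng"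
    proof -
      have "(g k - grad (x k)) \<bullet> g k \<le> norm (g k - grad (x k)) * norm (g k)"
        by (rule norm_cauchy_schwarz)
      also have "\<dots> \<le> e * ng" using gerr[of k] by (simp add: e_def ng_def mult_right_mono)
      finally show ?thesis .
    qed
    have gg: "grad (x k) \<bullet> g k = ng\<^sup>2 - (g k - grad (x k)) \<bullet> g k"
      by (simp add: inner_diff_left ng_def power2_norm_eq_inner)
    have "grad (x k) \<bullet> d k = - \<alpha> * (grad (x k) \<bullet> g k)" by (simp add: dk)
    also have "\<dots> \<le> - \<alpha> * (ng\<^sup>2 - e * ng)"
      using gg cs ap by (simp add: mult_left_mono)
    also have "\<dots> = - (\<alpha> * ng) * (ng - e)" by (simp add: power2_eq_square algebra_simps)
    also have "\<dots> = - (norm (d k))\<^sup>2" by (simp add: ang nd power2_eq_square algebra_simps)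
    finally have inn: "grad (x k) \<bullet> d k \<le> - (norm (d k))\<^sup>2" .
    have "norm (grad (x k)) = norm (g k - (g k - grad (x k)))" by simp
    also have "\<dots> \<le> norm (g k) + norm (g k - grad (x k))" by (rule norm_triangle_ineq4)
    finally have ngr: "norm (grad (x k)) \<le> norm (d k) + 2 * e" using gerr[of k] nd
      by (simp add: ng_def e_def)
    have "e * r 0 \<le> \<epsilon> 0 * r k" using ratio[of k] by (simp add: e_def)
    also have "\<dots> \<le> \<epsilon> 0 * norm (d k)" using nd big eps0 by (intro mult_left_mono) auto
    finally have "e \<le> \<epsilon> 0 / r 0 * norm (d k)" using r0 by (simp add: field_simps)
    hence "norm (grad (x k)) \<le> norm (d k) + 2 * (\<epsilon> 0 / r 0 * norm (d k))" using ngr by linarith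
    also have "\<dots> = C * norm (d k)" by (simp add: C_def algebra_simps)
    finally have "norm (grad (x k)) \<le> C * norm (d k)" .
    thus ?thesis using inn nd big by simp
  qed
  have nulf: "d k = 0 \<and> x (Suc k) = x k \<and> norm (grad (x k)) \<le> r k + 2 * \<epsilon> k" if "N k" for k
  proof -
    have "norm (grad (x k)) = norm (g k - (g k - grad (x k)))" by simp
    also have "\<dots> \<le> norm (g k) + norm (g k - grad (x k))" by (rule norm_triangle_ineq4)
    finally have "norm (grad (x k)) \<le> norm (g k) + norm (g k - grad (x k))" .
    then show ?thesis using nul[OF that] xs[of k] gerr[of k] that unfolding N_def by simp
  qed
  have dstep: "f (x (Suc k)) \<le> f (x k) - t k * (1 - L * t k / 2) * (norm (d k))\<^sup>2" for k
  proof (cases "N k")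
    case True then show ?thesis using nulf[OF True] by simp
  next
    case False
    have inn: "grad (x k) \<bullet> d k \<le> - (norm (d k))\<^sup>2" using serf[OF False] by blast
    have tp: "t k > 0" by (rule tpos)
    have "f (x (Suc k)) \<le> f (x k) + grad (x k) \<bullet> (x (Suc k) - x k) + L / 2 * (norm (x (Suc k) - x k))\<^sup>2"
      using desc unfolding L_descent_def by blast
    also have "x (Suc k) - x k = t k *\<^sub>R d k" by (simp add: xs)
    also have "grad (x k) \<bullet> (t k *\<^sub>R d k) = t k * (grad (x k) \<bullet> d k)" by simp
    also have "(norm (t k *\<^sub>R d k))\<^sup>2 = (t k)\<^sup>2 * (norm (d k))\<^sup>2"
      using tp by (simp add: power_mult_distrib)
    also have "t k * (grad (x k) \<bullet> d k) \<le> t k * (- (norm (d k))\<^sup>2)"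
      using inn tp by (intro mult_left_mono) auto
    finally show ?thesis by (simp add: power2_eq_square algebra_simps)
  qed
  obtain K0 c where cpos: "c > 0" and cK0: "\<And>k. k \<ge> K0 \<Longrightarrow> 1 - L * t k / 2 \<ge> c"
    and tdiv: "\<And>B. \<exists>n. (\<Sum>k<n. t k) > B"
  proof -
    have "\<exists>K0 c. c > 0 \<and> (\<forall>k\<ge>K0. 1 - L * t k / 2 \<ge> c) \<and> (\<forall>B. \<exists>n. (\<Sum>k<n. t k) > B)"
      using steps
    proof
      assume dm: "diminishing_steps t"
      hence tl: "t \<longlonglongrightarrow> 0" and sl: "filterlim (\<lambda>n. \<Sum>k<n. t k) at_top sequentially"
        by (auto simp: diminishing_steps_def)
      have "\<forall>\<^sub>F k in sequentially. t k < 1 / L" using tl Lpos by (intro order_tendstoD) auto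
      then obtain K0 where K0: "\<And>k. k \<ge> K0 \<Longrightarrow> t k < 1 / L" by (auto simp: eventually_sequentially)
      have "\<forall>k\<ge>K0. 1 - L * t k / 2 \<ge> 1 / 2"
      proof (intro allI impI)
        fix k assume "k \<ge> K0" hence "t k < 1 / L" using K0 by blast
        hence "L * t k < 1" using Lpos by (simp add: field_simps)
        thus "1 - L * t k / 2 \<ge> 1 / 2" by simp
      qed
      moreover have "\<forall>B. \<exists>n. (\<Sum>k<n. t k) > B"
      proof
        fix B
        have "\<forall>\<^sub>F n in sequentially. B < (\<Sum>k<n. t k)" using sl by (simp add: filterlim_at_top_dense)
        then obtain M where "\<And>n. n \<ge> M \<Longrightarrow> B < (\<Sum>k<n. t k)" by (auto simp: eventually_sequentially)
        thus "\<exists>n. (\<Sum>k<n. t k) > B" by blast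
      qed
      ultimately show ?thesis by (intro exI[of _ K0] exI[of _ "1/2::real"]) auto
    next
      assume "constant_type_steps L t"
      then obtain \<delta> \<delta>' where dd: "0 < \<delta>" "\<delta> < 2" "0 < \<delta>'"
        and tb: "\<And>k. \<delta>' \<le> t k \<and> t k \<le> (2 - \<delta>) / L"
        unfolding constant_type_steps_def by blast
      have "\<forall>k\<ge>0. 1 - L * t k / 2 \<ge> \<delta> / 2"
      proof (intro allI impI)
        fix k :: nat
        have "t k \<le> (2 - \<delta>) / L" using tb by blast
        hence "L * t k \<le> 2 - \<delta>" using Lpos by (simp add: field_simps)
        thus "1 - L * t k / 2 \<ge> \<delta> / 2" by simp
      qed
      moreover have "\<forall>B. \<exists>n. (\<Sum>k<n. t k) > B"
      proof
        fix B
        obtain n where n: "B < of_nat n * \<delta>'" using ex_less_of_nat_mult[OF dd(3)] by blast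
        have "(\<Sum>k<n. \<delta>') \<le> (\<Sum>k<n. t k)" using tb by (intro sum_mono) blast
        hence "of_nat n * \<delta>' \<le> (\<Sum>k<n. t k)" by simp
        thus "\<exists>n. (\<Sum>k<n. t k) > B" using n by (intro exI[of _ n]) linarith
      qed
      ultimately show ?thesis using dd by (intro exI[of _ 0] exI[of _ "\<delta>/2"]) auto
    qed
    thus ?thesis using that by blast
  qed
  have dec: "f (x (Suc k)) \<le> f (x k) - c * t k * (norm (d k))\<^sup>2" if "k \<ge> K0" for k
  proof -
    have "t k * c \<le> t k * (1 - L * t k / 2)"
      using cK0[OF that] tpos[of k] by (intro mult_left_mono) auto
    hence "t k * c * (norm (d k))\<^sup>2 \<le> t k * (1 - L * t k / 2) * (norm (d k))\<^sup>2"
      by (intro mult_right_mono) auto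
    hence "c * t k * (norm (d k))\<^sup>2 \<le> t k * (1 - L * t k / 2) * (norm (d k))\<^sup>2"
      by (simp add: mult.commute)
    then show ?thesis using dstep[of k] by linarith
  qed
  have fmono: "f (x k) \<le> f (x m)" if "K0 \<le> m" "m \<le> k" for m k
    using that(2)
  proof (induction k rule: dec_induct)
    case base then show ?case by simp
  next
    case (step k)
    have "0 \<le> c * t k * (norm (d k))\<^sup>2"
      using tpos[of k] cpos by (intro mult_nonneg_nonneg) auto
    hence "f (x (Suc k)) \<le> f (x k)"
      using dec[of k] step(1) that(1) by linarith
    then show ?case using step by simp
  qed
  have fcont: "isCont f y" for y
    using has_derivative_continuous[OF deriv[of y]] by simp
  from acc obtain \<sigma> where sig: "strict_mono \<sigma>" and sigl: "(\<lambda>n. x (\<sigma> n)) \<longlonglongrightarrow> xb"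
    unfolding accumulation_point_def by (auto simp: o_def)
  have fsig: "(\<lambda>n. f (x (\<sigma> n))) \<longlonglongrightarrow> f xb"
    using isCont_tendsto_compose[OF fcont sigl] .
  have fstar: "f xb \<le> f (x k)" if "k \<ge> K0" for k
  proof (rule LIMSEQ_le_const2[OF fsig])
    show "\<exists>N. \<forall>n\<ge>N. f (x (\<sigma> n)) \<le> f (x k)"
      using fmono[OF that] seq_suble[OF sig] by (metis le_trans)
  qed
  have flim: "(\<lambda>k. f (x k)) \<longlonglongrightarrow> f xb"
  proof (rule LIMSEQ_I)
    fix e :: real assume e: "e > 0"
    from fsig e obtain n0 where n0: "\<And>n. n \<ge> n0 \<Longrightarrow> norm (f (x (\<sigma> n)) - f xb) < e"
      by (metis LIMSEQ_D)
    define n where "n = max n0 K0"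
    have sn: "\<sigma> n \<ge> K0" using seq_suble[OF sig, of n] by (simp add: n_def)
    show "\<exists>no. \<forall>k\<ge>no. norm (f (x k) - f xb) < e"
    proof (intro exI allI impI)
      fix k assume k: "k \<ge> \<sigma> n"
      have "f (x k) \<le> f (x (\<sigma> n))" using fmono[OF sn k] .
      moreover have "f xb \<le> f (x k)" using fstar[of k] sn k by simp
      moreover have "norm (f (x (\<sigma> n)) - f xb) < e" using n0[of n] by (simp add: n_def)
      ultimately show "norm (f (x k) - f xb) < e" by simp
    qed
  qed
  have conv: "x \<longlonglongrightarrow> xb"
  proof (cases "\<exists>k\<ge>K0. f (x k) = f xb")
    case True
    then obtain k0 where k0: "k0 \<ge> K0" "f (x k0) = f xb" by blast
    have feq: "f (x j) = f xb" if "j \<ge> k0" for j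
      using fmono[OF k0(1) that] fstar[of j] that k0 by simp
    have xc: "x j = x k0" if "k0 \<le> j" for j
      using that
    proof (induction j rule: dec_induct)
      case base show ?case by simp
    next
      case (step j)
      have j: "j \<ge> K0" using step(1) k0(1) by simp
      have le: "c * t j * (norm (d j))\<^sup>2 \<le> 0" using dec[OF j] feq[of j] feq[of "Suc j"] step(1) by simp
      have nn: "0 \<le> c * t j * (norm (d j))\<^sup>2" using cpos tpos[of j] by simp
      hence "c * t j * (norm (d j))\<^sup>2 = 0" using le by linarith
      hence "d j = 0" using cpos tpos[of j] by simp
      thus ?case using xs[of j] step(3) by simp
    qed
    have "(\<lambda>n. x (n + k0)) = (\<lambda>n. x k0)" by (intro ext xc) simp
    hence "(\<lambda>n. x (n + k0)) \<longlonglongrightarrow> x k0" by simp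
    hence xl: "x \<longlonglongrightarrow> x k0" by (rule LIMSEQ_offset)
    have "(x \<circ> \<sigma>) \<longlonglongrightarrow> x k0" by (rule LIMSEQ_subseq_LIMSEQ[OF xl sig])
    hence "x k0 = xb" using sigl by (intro LIMSEQ_unique) (auto simp: o_def)
    thus ?thesis using xl by simp
  next
    case False
    have fgt: "f (x k) > f xb" if "k \<ge> K0" for k
    proof -
      have "f (x k) \<noteq> f xb" using False that by blast
      thus ?thesis using fstar[OF that] by simp
    qed
    from KL obtain \<eta> U \<psi> where eta: "\<eta> > 0" and U: "open U" "xb \<in> U"
      and psim: "mono_on {0<..<\<eta>} \<psi>" and psip: "\<forall>s\<in>{0<..<\<eta>}. \<psi> s > 0"
      and psii: "(\<lambda>s. 1 / \<psi> s) integrable_on {0<..<\<eta>}"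
      and kl: "\<And>y. y \<in> U \<Longrightarrow> f xb < f y \<Longrightarrow> f y < f xb + \<eta> \<Longrightarrow> norm (grad y) \<ge> \<psi> (f y - f xb)"
      unfolding KL_at_def by blast
    obtain \<rho> where rho: "\<rho> > 0" "ball xb \<rho> \<subseteq> U" using U open_contains_ball by blast
    obtain \<phi> where phi1: "\<And>a b. 0 < b \<Longrightarrow> b \<le> a \<Longrightarrow> a < \<eta> \<Longrightarrow> (a - b) / \<psi> a \<le> \<phi> a - \<phi> b"
      and phi2: "\<And>s. 0 \<le> s \<Longrightarrow> s \<le> \<eta> \<Longrightarrow> 0 \<le> \<phi> s"
      and phi3: "\<And>e. e > 0 \<Longrightarrow> \<exists>\<delta>>0. \<forall>s. 0 < s \<and> s < \<delta> \<longrightarrow> \<phi> s < e"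
      using phi_exists[OF eta psim psip psii] by blast
    define c' where "c' = c / C"
    have c'p: "c' > 0" using cpos Cpos by (simp add: c'_def)
    define F where "F k = f (x k) - f xb" for k
    have key: "c' * norm (x (Suc k) - x k) \<le> \<phi> (F k) - \<phi> (F (Suc k))"
      if k: "k \<ge> K0" "x k \<in> U" "F k < \<eta>" for k
    proof (cases "N k")
      case True then show ?thesis using nulf[OF True] by (simp add: F_def)
    next
      case False
      define n where "n = norm (d k)"
      have bp: "F (Suc k) > 0" using fgt[of "Suc k"] k by (simp add: F_def)
      have ap: "F k > 0" using fgt[of k] k by (simp add: F_def)
      have dd: "c * t k * n\<^sup>2 \<le> F k - F (Suc k)" using dec[OF k(1)] by (simp add: F_def n_def)
      have nn: "0 \<le> c * t k * n\<^sup>2" using cpos tpos[of k] by simp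
      have ba: "F (Suc k) \<le> F k" using dd nn by linarith
      have psia: "\<psi> (F k) \<le> norm (grad (x k))" using kl[OF k(2)] ap k(3) by (simp add: F_def)
      have psip': "\<psi> (F k) > 0" using psip ap k(3) by simp
      have sf: "n > r k" "norm (grad (x k)) \<le> C * n" using serf[OF False] by (auto simp: n_def)
      have np: "n > 0" using sf pos[of k] by linarith
      have e1: "c * t k * n\<^sup>2 / (C * n) \<le> c * t k * n\<^sup>2 / \<psi> (F k)"
        using psia sf psip' nn Cpos np by (intro divide_left_mono) auto
      have e2: "c * t k * n\<^sup>2 / \<psi> (F k) \<le> (F k - F (Suc k)) / \<psi> (F k)"
        using dd psip' by (intro divide_right_mono) auto
      have "norm (x (Suc k) - x k) = t k * n" using tpos[of k] by (simp add: xs n_def)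
      hence e3: "c' * norm (x (Suc k) - x k) = c * t k * n\<^sup>2 / (C * n)"
        using np Cpos by (simp add: c'_def power2_eq_square field_simps)
      show ?thesis using e1 e2 e3 phi1[OF bp ba k(3)] by linarith
    qed
    have Flim: "F \<longlonglongrightarrow> 0" unfolding F_def using tendsto_diff[OF flim tendsto_const[of "f xb"]] by simp
    obtain \<delta> where dl: "\<delta> > 0" "\<And>s. 0 < s \<Longrightarrow> s < \<delta> \<Longrightarrow> \<phi> s < c' * \<rho> / 2"
      using phi3[of "c' * \<rho> / 2"] c'p rho by auto
    have "\<forall>\<^sub>F k in sequentially. F k < min \<delta> \<eta>" using Flim dl eta by (intro order_tendstoD) auto
    then obtain N1 where N1: "\<And>k. k \<ge> N1 \<Longrightarrow> F k < min \<delta> \<eta>" by (auto simp: eventually_sequentially)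
    have "\<forall>\<^sub>F n in sequentially. dist (x (\<sigma> n)) xb < \<rho> / 2" using sigl rho by (intro tendstoD) auto
    then obtain N2 where N2: "\<And>n. n \<ge> N2 \<Longrightarrow> dist (x (\<sigma> n)) xb < \<rho> / 2" by (auto simp: eventually_sequentially)
    define K where "K = \<sigma> (max (max N1 N2) K0)"
    have KK: "K \<ge> N1" "K \<ge> K0" using seq_suble[OF sig, of "max (max N1 N2) K0"] by (auto simp: K_def)
    have xK: "dist (x K) xb < \<rho> / 2" unfolding K_def by (rule N2) simp
    have FK: "0 < F K" "F K < \<eta>" "\<phi> (F K) < c' * \<rho> / 2"
      using N1[OF KK(1)] fgt[OF KK(2)] dl by (auto simp: F_def)
    define S where "S m = (\<Sum>j<m. norm (x (Suc (K + j)) - x (K + j)))" for m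
    have claim: "(\<forall>j\<le>m. x (K + j) \<in> ball xb \<rho>) \<and> c' * S m \<le> \<phi> (F K) - \<phi> (F (K + m))" for m
    proof (induction m)
      case 0 show ?case using xK rho(1) by (simp add: S_def dist_commute)
    next
      case (Suc m)
      let ?k = "K + m"
      have kU: "x ?k \<in> U" using Suc rho by auto
      have kK0: "?k \<ge> K0" using KK by simp
      have "f (x ?k) \<le> f (x K)" using fmono[OF KK(2)] by simp
      hence kF: "F ?k < \<eta>" using FK by (simp add: F_def)
      have st: "c' * norm (x (Suc ?k) - x ?k) \<le> \<phi> (F ?k) - \<phi> (F (Suc ?k))" by (rule key[OF kK0 kU kF])
      have Sc: "c' * S (Suc m) \<le> \<phi> (F K) - \<phi> (F (K + Suc m))"
        using Suc st by (simp add: S_def distrib_left)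
      have "f (x (K + Suc m)) \<le> f (x K)" using fmono[OF KK(2)] by simp
      moreover have "F (K + Suc m) > 0" using fgt[of "K + Suc m"] KK by (simp add: F_def)
      ultimately have "0 \<le> \<phi> (F (K + Suc m))" using FK by (intro phi2) (auto simp: F_def)
      hence "c' * S (Suc m) < c' * (\<rho> / 2)" using Sc FK by simp
      hence Sl: "S (Suc m) < \<rho> / 2" using c'p by simp
      have "norm (x (K + Suc m) - x (K + 0)) \<le> (\<Sum>j<Suc m. norm (x (K + Suc j) - x (K + j)))"
        using norm_telescope_le[of "\<lambda>j. x (K + j)" "Suc m"] by simp
      hence "norm (x (K + Suc m) - x K) \<le> S (Suc m)" by (simp add: S_def)
      moreover have "dist xb (x (K + Suc m)) \<le> dist xb (x K) + dist (x K) (x (K + Suc m))"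
        by (rule dist_triangle)
      moreover have "dist (x K) (x (K + Suc m)) = norm (x (K + Suc m) - x K)"
        by (simp add: dist_norm norm_minus_commute)
      moreover have "dist xb (x K) < \<rho> / 2" using xK by (simp add: dist_commute)
      ultimately have "dist xb (x (K + Suc m)) < \<rho>" using Sl by linarith
      hence last: "x (K + Suc m) \<in> ball xb \<rho>" by simp
      have "\<forall>j\<le>Suc m. x (K + j) \<in> ball xb \<rho>"
      proof (intro allI impI)
        fix j assume "j \<le> Suc m"
        hence "j \<le> m \<or> j = Suc m" by (simp add: le_Suc_eq)
        thus "x (K + j) \<in> ball xb \<rho>" using Suc last by blast
      qed
      thus ?case using Sc by blast
    qed
    have Sb: "S m \<le> \<phi> (F K) / c'" for m
    proof -
      have "0 \<le> \<phi> (F (K + m))"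
      proof (rule phi2)
        show "0 \<le> F (K + m)" using fgt[of "K + m"] KK by (simp add: F_def)
        have "f (x (K + m)) \<le> f (x K)" using fmono[OF KK(2)] by simp
        thus "F (K + m) \<le> \<eta>" using FK by (simp add: F_def)
      qed
      hence "c' * S m \<le> \<phi> (F K)" using claim[of m] by simp
      thus ?thesis using c'p by (simp add: field_simps)
    qed
    have "summable (\<lambda>j. norm (x (Suc (K + j)) - x (K + j)))"
      by (rule summableI_nonneg_bounded[of _ "\<phi> (F K) / c'"]) (use Sb in \<open>auto simp: S_def\<close>)
    hence "convergent (\<lambda>j. x (K + j))"
      by (intro summable_diff_convergent) simp
    then obtain l where "(\<lambda>j. x (K + j)) \<longlonglongrightarrow> l" by (auto simp: convergent_def)
    hence "(\<lambda>j. x (j + K)) \<longlonglongrightarrow> l" by (simp add: add.commute)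
    hence xl: "x \<longlonglongrightarrow> l" by (rule LIMSEQ_offset)
    have "(x \<circ> \<sigma>) \<longlonglongrightarrow> l" by (rule LIMSEQ_subseq_LIMSEQ[OF xl sig])
    hence "l = xb" using sigl by (intro LIMSEQ_unique) (auto simp: o_def)
    thus ?thesis using xl by simp
  qed
  have infnull: "\<exists>k\<ge>M. N k" for M
  proof (rule ccontr)
    assume "\<not> (\<exists>k\<ge>M. N k)"
    hence sr: "\<And>k. k \<ge> M \<Longrightarrow> \<not> N k" by blast
    define M' where "M' = max M K0"
    have rc: "r k = r M'" if "M' \<le> k" for k
      using that
    proof (induction k rule: dec_induct)
      case base show ?case by simp
    next
      case (step k)
      have "k \<ge> M" using step(1) by (simp add: M'_def)
      thus ?case using ser[OF sr[of k]] step(3) by simp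
    qed
    define T where "T n = (\<Sum>k<n. t k)" for n
    define R where "R = r M'"
    have Rp: "R > 0" using pos by (simp add: R_def)
    have tele: "f (x (M' + n)) \<le> f (x M') - c * R\<^sup>2 * (T (M' + n) - T M')" for n
    proof (induction n)
      case 0 show ?case by simp
    next
      case (Suc n)
      let ?k = "M' + n"
      have k: "?k \<ge> M" "?k \<ge> K0" by (auto simp: M'_def)
      have "R < norm (d ?k)" using serf[OF sr[OF k(1)]] rc[of ?k] by (simp add: R_def)
      hence "R\<^sup>2 \<le> (norm (d ?k))\<^sup>2" using Rp by (intro power_mono) auto
      hence "c * t ?k * R\<^sup>2 \<le> c * t ?k * (norm (d ?k))\<^sup>2"
        using cpos tpos[of ?k] by (intro mult_left_mono) auto
      hence "f (x (Suc ?k)) \<le> f (x ?k) - c * t ?k * R\<^sup>2" using dec[OF k(2)] by linarith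
      moreover have "T (M' + Suc n) = T (M' + n) + t ?k" by (simp add: T_def)
      ultimately show ?case using Suc by (simp add: algebra_simps)
    qed
    have cR: "c * R\<^sup>2 > 0" using cpos Rp by simp
    obtain n where n: "T n > T M' + (f (x M') - f xb) / (c * R\<^sup>2)" using tdiv unfolding T_def by blast
    have "T n \<le> T (M' + n)" unfolding T_def using tpos by (intro sum_mono2) (auto simp: less_imp_le)
    moreover have "f xb \<le> f (x (M' + n))" using fstar by (simp add: M'_def)
    ultimately have "c * R\<^sup>2 * (T (M' + n) - T M') \<le> f (x M') - f xb" using tele[of n] by linarith
    hence "T (M' + n) - T M' \<le> (f (x M') - f xb) / (c * R\<^sup>2)" using cR by (simp add: pos_le_divide_eq mult.commute)
    thus False using n \<open>T n \<le> T (M' + n)\<close> by linarith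
  qed
  have r0lim: "r \<longlonglongrightarrow> 0"
  proof -
    have rdec: "decseq r"
    proof (rule decseq_SucI)
      fix k show "r (Suc k) \<le> r k"
        using nul[of k] ser[of k] pos[of k] mu by (cases "N k") auto
    qed
    obtain l where l: "r \<longlonglongrightarrow> l" "\<forall>i. l \<le> r i"
      using decseq_convergent[OF rdec, of 0] pos by (auto simp: less_imp_le)
    have "l = 0"
    proof (rule ccontr)
      assume "l \<noteq> 0"
      have l0: "0 \<le> l" using pos by (intro LIMSEQ_le_const[OF l(1)]) (auto simp: less_imp_le)
      hence lp: "l > 0" using \<open>l \<noteq> 0\<close> by simp
      have "l < l / \<mu>" using lp mu by (simp add: field_simps)
      hence "\<forall>\<^sub>F k in sequentially. r k < l / \<mu>" using l(1) by (intro order_tendstoD)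
      then obtain M where M: "\<And>k. k \<ge> M \<Longrightarrow> r k < l / \<mu>" unfolding eventually_sequentially by blast
      from infnull[of M] obtain k where k: "k \<ge> M" "N k" by blast
      have "r (Suc k) = \<mu> * r k" using nul[OF k(2)] by simp
      also have "\<dots> < \<mu> * (l / \<mu>)" using M[OF k(1)] mu by (intro mult_strict_left_mono) auto
      also have "\<dots> = l" using mu by simp
      finally show False using l(2)[rule_format, of "Suc k"] by simp
    qed
    thus ?thesis using l(1) by simp
  qed
  have e0lim: "\<epsilon> \<longlonglongrightarrow> 0"
  proof (rule real_tendsto_sandwich[of "\<lambda>_. 0" _ _ "\<lambda>k. \<epsilon> 0 / r 0 * r k"])
    show "\<forall>\<^sub>F n in sequentially. 0 \<le> \<epsilon> n" using pos by (simp add: less_imp_le)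
    show "\<forall>\<^sub>F n in sequentially. \<epsilon> n \<le> \<epsilon> 0 / r 0 * r n"
      using ratio r0 by (simp add: field_simps mult.commute)
    show "(\<lambda>_. 0::real) \<longlonglongrightarrow> 0" by simp
    show "(\<lambda>k. \<epsilon> 0 / r 0 * r k) \<longlonglongrightarrow> 0" using tendsto_mult_left[OF r0lim, of "\<epsilon> 0 / r 0"] by (simp only: mult_zero_right)
  qed
  have gstat: "grad xb = 0"
  proof (rule ccontr)
    assume ne: "grad xb \<noteq> 0"
    define a where "a = norm (grad xb)"
    have a: "a > 0" using ne by (simp add: a_def)
    have "(\<lambda>k. norm (grad (x k))) \<longlonglongrightarrow> a"
      unfolding a_def using cont conv
      by (intro tendsto_norm isCont_tendsto_compose[of _ grad]) (auto simp: continuous_on_eq_continuous_at)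
    hence ev1: "\<forall>\<^sub>F k in sequentially. norm (grad (x k)) > a / 2"
      using a by (intro order_tendstoD) auto
    have "(\<lambda>k. r k + 2 * \<epsilon> k) \<longlonglongrightarrow> 0 + 2 * 0" using r0lim e0lim by (intro tendsto_intros)
    hence ev2: "\<forall>\<^sub>F k in sequentially. r k + 2 * \<epsilon> k < a / 2"
      using a by (intro order_tendstoD) auto
    from eventually_conj[OF ev1 ev2] obtain M where
      M: "\<And>k. k \<ge> M \<Longrightarrow> norm (grad (x k)) > a / 2 \<and> r k + 2 * \<epsilon> k < a / 2"
      unfolding eventually_sequentially by blast
    from infnull[of M] obtain k where "k \<ge> M" "N k" by blast
    with M[of k] nulf[of k] show False by linarith
  qed
  show ?thesis using gstat conv by simp
qed

end
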